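(* Let $\mathcal{G}=(V,\emptyset,B)$ be a connected bidirected graph with $V=\{1,\dots,p\}$. Then $\tau(\mathcal{G})=p$. Moreover, if $n<p$, then $\hat\ell(\mathcal{G}\mid S_{0,n})=\infty$ almost surely.
   Context: $B$ is a set of 2-element subsets of $V$ (bidirected edges); $\mathcal{G}$ is connected if any two vertices are joined by a path of such edges. $PD(\mathcal{G})=PD(B)$ is the set of positive definite $p\times p$ matrices $\Sigma=(\sigma_{ij})$ with $\sigma_{ij}=0$ whenever $i\ne j$ and $\{i,j\}\notin B$. For an i.i.d. sample $X^{(1)},\dots,X^{(n)}$ from an absolutely continuous distribution on $\mathbb{R}^p$, $S_{0,n}=\frac1n\sum_s X^{(s)}(X^{(s)})^T$; $\ell(\Sigma\mid S)=-\log\det\Sigma-\mathrm{trace}(\Sigma^{-1}S)$; $\hat\ell(\mathcal{G}\mid S)=\sup_{\Sigma\in PD(\mathcal{G})}\ell(\Sigma\mid S)$; $\tau(\mathcal{G})=\min\{N\in\mathbb{N}:\hat\ell(\mathcal{G}\mid S_{0,n})<\infty\text{ a.s. for all }n\ge N\}$. *)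

theory Defs
  imports "HOL-Analysis.Analysis" "HOL-Probability.Probability"
begin

text \<open>Vertices are the elements of a finite index type 'p (so V has p = CARD('p) elements);
  B is a set of 2-element subsets of vertices (bidirected edges).\<close>

definition bidirected_edges :: "'p set set \<Rightarrow> bool" where
  "bidirected_edges B \<longleftrightarrow> (\<forall>e\<in>B. card e = 2)"

definition bg_connected :: "'p set set \<Rightarrow> bool" where
  "bg_connected B \<longleftrightarrow> (\<forall>i j. (i, j) \<in> {(a, b). {a, b} \<in> B}\<^sup>*)"

definition pos_def :: "real^'p^'p \<Rightarrow> bool" where
  "pos_def A \<longleftrightarrow> transpose A = A \<and> (\<forall>x. x \<noteq> 0 \<longrightarrow> x \<bullet> (A *v x) > 0)"

definition PD :: "'p set set \<Rightarrow> (real^'p^'p) set" where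
  "PD B = {\<Sigma>. pos_def \<Sigma> \<and> (\<forall>i j. i \<noteq> j \<and> {i, j} \<notin> B \<longrightarrow> \<Sigma> $ i $ j = 0)}"

definition loglik :: "real^'p^'p \<Rightarrow> real^'p^'p \<Rightarrow> real" where
  "loglik \<Sigma> S = - ln (det \<Sigma>) - trace (matrix_inv \<Sigma> ** S)"

definition max_loglik :: "'p set set \<Rightarrow> real^'p^'p \<Rightarrow> ereal" where
  "max_loglik B S = (SUP \<Sigma>\<in>PD B. ereal (loglik \<Sigma> S))"

definition outer :: "real^'p \<Rightarrow> real^'p^'p" where
  "outer x = (\<chi> i j. x $ i * x $ j)"

definition sample_cov :: "nat \<Rightarrow> (nat \<Rightarrow> real^'p) \<Rightarrow> real^'p^'p" where
  "sample_cov n X = (1 / real n) *\<^sub>R (\<Sum>s<n. outer (X s))"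

definition sample_measure :: "nat \<Rightarrow> (real^'p) measure \<Rightarrow> (nat \<Rightarrow> real^'p) measure" where
  "sample_measure n M = PiM {..<n} (\<lambda>_. M)"

definition tau :: "(real^'p) measure \<Rightarrow> 'p set set \<Rightarrow> nat" where
  "tau M B = (LEAST N. \<forall>n\<ge>N. AE X in sample_measure n M. max_loglik B (sample_cov n X) < \<infinity>)"

end

theory Submission
  imports Defs
begin


lemma matrix_inv_both:
  fixes A :: "real^'n^'n"
  assumes "invertible A"
  shows "A ** matrix_inv A = mat 1" "matrix_inv A ** A = mat 1"
proof -
  have "\<exists>A'. A ** A' = mat 1 \<and> A' ** A = mat 1" using assms unfolding invertible_def by blast
  then have "A ** matrix_inv A = mat 1 \<and> matrix_inv A ** A = mat 1"
    unfolding matrix_inv_def by (rule someI_ex)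
  then show "A ** matrix_inv A = mat 1" "matrix_inv A ** A = mat 1" by auto
qed

lemma mv_axis: "((A::real^'n^'n) *v axis k 1) $ i = A$i$k"
proof -
  have "(A *v axis k 1)$i = (\<Sum>j\<in>UNIV. A$i$j * (axis k 1 :: real^'n) $ j)"
    by (simp add: matrix_vector_mult_def)
  also have "\<dots> = (\<Sum>j\<in>UNIV. if j = k then A$i$j else 0)"
    by (rule sum.cong) (auto simp: axis_def)
  also have "\<dots> = A$i$k" by simp
  finally show ?thesis .
qed

lemma pos_def_diag_pos:
  fixes G :: "real^'n^'n"
  assumes "pos_def G" shows "G$k$k > 0"
proof -
  have "axis k 1 \<bullet> (G *v axis k 1) > 0" using assms unfolding pos_def_def
    by (metis axis_eq_0_iff zero_neq_one)
  moreover have "axis k 1 \<bullet> (G *v axis k 1) = G$k$k"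
    by (simp add: inner_axis' mv_axis)
  ultimately show ?thesis by simp
qed

lemma inner_mat_transpose:
  fixes A :: "real^'n^'n"
  shows "x \<bullet> (A *v y) = (transpose A *v x) \<bullet> y"
  by (metis dot_lmul_matrix vector_transpose_matrix transpose_transpose)

lemma pos_def_congr:
  fixes G L :: "real^'n^'n"
  assumes "pos_def G" "invertible L"
  shows "pos_def (L ** G ** transpose L)"
  unfolding pos_def_def
proof safe
  show "transpose (L ** G ** transpose L) = L ** G ** transpose L"
    using assms(1) unfolding pos_def_def
    by (simp add: matrix_transpose_mul matrix_mul_assoc)
next
  fix x :: "real^'n" assume "x \<noteq> 0"
  have "transpose L *v x \<noteq> 0"
  proof
    assume h: "transpose L *v x = 0"
    have "invertible (transpose L)" using assms(2) by (simp add: transpose_invertible)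
    then have "inj ((*v) (transpose L))" by (rule inj_matrix_vector_mult)
    then show False using h \<open>x \<noteq> 0\<close> by (metis matrix_vector_mult_0_right injD)
  qed
  then have "(transpose L *v x) \<bullet> (G *v (transpose L *v x)) > 0"
    using assms(1) unfolding pos_def_def by blast
  also have "(transpose L *v x) \<bullet> (G *v (transpose L *v x)) = x \<bullet> ((L ** G ** transpose L) *v x)"
    by (simp add: inner_mat_transpose matrix_vector_mul_assoc[symmetric])
  finally show "0 < x \<bullet> ((L ** G ** transpose L) *v x)" .
qed

lemma pos_def_sym: "pos_def (G::real^'n^'n) \<Longrightarrow> G$i$j = G$j$i"
  unfolding pos_def_def by (metis transpose_def vec_lambda_beta)

definition Lm :: "'n::finite \<Rightarrow> ('n \<Rightarrow> real) \<Rightarrow> real^'n^'n" where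
  "Lm k c = (\<chi> i j. (if i = j then 1 else 0) - (if j = k then c i else 0))"

lemma Lm_mult_left: "(Lm k c ** A) $ i $ j = A$i$j - c i * A$k$j"
proof -
  have "(Lm k c ** A) $ i $ j = (\<Sum>m\<in>UNIV. ((if i = m then 1 else 0) - (if m = k then c i else 0)) * A$m$j)"
    by (simp add: matrix_matrix_mult_def Lm_def)
  also have "\<dots> = (\<Sum>m\<in>UNIV. (if m = i then A$m$j else 0) - (if m = k then c i * A$m$j else 0))"
    by (rule sum.cong) (auto simp: algebra_simps)
  also have "\<dots> = A$i$j - c i * A$k$j" by (simp add: sum_subtractf)
  finally show ?thesis .
qed

lemma Lm_mult_right: "(A ** transpose (Lm k c)) $ i $ j = A$i$j - c j * A$i$k"
proof -
  have "(A ** transpose (Lm k c)) $ i $ j = (\<Sum>m\<in>UNIV. A$i$m * ((if j = m then 1 else 0) - (if m = k then c j else 0)))"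
    by (simp add: matrix_matrix_mult_def Lm_def transpose_def)
  also have "\<dots> = (\<Sum>m\<in>UNIV. (if m = j then A$i$m else 0) - (if m = k then c j * A$i$m else 0))"
    by (rule sum.cong) (auto simp: algebra_simps)
  also have "\<dots> = A$i$j - c j * A$i$k" by (simp add: sum_subtractf)
  finally show ?thesis .
qed

lemma det_Lm:
  fixes k :: "'n::finite"
  assumes "c k = 0"
  shows "det (Lm k c) = 1"
proof -
  let ?x = "(\<chi> i. - c i) :: real^'n"
  have x: "?x = (\<Sum>j\<in>UNIV - {k}. (- c j) *s row j (mat 1 :: real^'n^'n))"
  proof (subst vec_eq_iff, intro allI)
    fix i
    have "(\<Sum>j\<in>UNIV - {k}. (- c j) *s row j (mat 1 :: real^'n^'n)) $ i
        = (\<Sum>j\<in>UNIV - {k}. (if j = i then - c j else 0))"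
      unfolding sum_component by (rule sum.cong) (auto simp: row_def mat_def)
    also have "\<dots> = (if i \<in> UNIV - {k} then - c i else 0)" by (rule sum.delta) simp
    also have "\<dots> = - c i" using assms by auto
    finally show "?x $ i = (\<Sum>j\<in>UNIV - {k}. (- c j) *s row j (mat 1 :: real^'n^'n)) $ i" by simp
  qed
  have xs: "?x \<in> vec.span {row j (mat 1 :: real^'n^'n) |j. j \<noteq> k}"
    unfolding x by (intro vec.span_sum vec.span_scale vec.span_base) auto
  have "transpose (Lm k c) = (\<chi> r. if r = k then row k (mat 1) + ?x else row r (mat 1))"
    by (auto simp: vec_eq_iff transpose_def Lm_def row_def mat_def assms)
  then have "det (transpose (Lm k c)) = det (mat 1 :: real^'n^'n)"
    using det_row_span[OF xs] by simp
  then show ?thesis by simp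
qed

lemma hadamard_aux:
  fixes I :: "'n::finite set"
  assumes "finite I"
  shows "\<forall>G::real^'n^'n. pos_def G \<and> (\<forall>i j. i \<noteq> j \<and> (i \<notin> I \<or> j \<notin> I) \<longrightarrow> G$i$j = 0)
     \<longrightarrow> 0 < det G \<and> det G \<le> (\<Prod>i\<in>UNIV. G$i$i)"
  using assms
proof (induction I rule: finite_induct)
  case empty
  show ?case
  proof safe
    fix G :: "real^'n^'n" assume G: "pos_def G" "\<forall>i j. i \<noteq> j \<and> (i \<notin> {} \<or> j \<notin> {}) \<longrightarrow> G$i$j = 0"
    then have d: "det G = (\<Prod>i\<in>UNIV. G$i$i)" by (intro det_diagonal) auto
    show "0 < det G" unfolding d using pos_def_diag_pos[OF G(1)] by (intro prod_pos) auto
    show "det G \<le> (\<Prod>i\<in>UNIV. G$i$i)" using d by simp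
  qed
next
  case (insert k I)
  show ?case
  proof safe
    fix G :: "real^'n^'n"
    assume G: "pos_def G" and Z: "\<forall>i j. i \<noteq> j \<and> (i \<notin> insert k I \<or> j \<notin> insert k I) \<longrightarrow> G$i$j = 0"
    define g where "g = G$k$k"
    have g: "g > 0" unfolding g_def by (rule pos_def_diag_pos[OF G])
    define c where "c = (\<lambda>i. if i = k then 0 else G$i$k / g)"
    have ck: "c k = 0" by (simp add: c_def)
    define H where "H = Lm k c ** G ** transpose (Lm k c)"
    have dL: "det (Lm k c) = 1" by (rule det_Lm) (rule ck)
    have invL: "invertible (Lm k c)" using dL by (simp add: invertible_det_nz)
    have Hpd: "pos_def H" unfolding H_def by (rule pos_def_congr[OF G invL])
    have Hij: "H$i$j = (G$i$j - c i * G$k$j) - c j * (G$i$k - c i * G$k$k)" for i j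
      unfolding H_def by (simp add: Lm_mult_right Lm_mult_left)
    have sym: "G$i$j = G$j$i" for i j by (rule pos_def_sym[OF G])
    have HZ: "\<forall>i j. i \<noteq> j \<and> (i \<notin> I \<or> j \<notin> I) \<longrightarrow> H$i$j = 0"
    proof (intro allI impI)
      fix i j assume ij: "i \<noteq> j \<and> (i \<notin> I \<or> j \<notin> I)"
      show "H$i$j = 0"
      proof (cases "i = k")
        case True
        then show ?thesis using ij g by (auto simp add: Hij c_def sym[of k j] g_def)
      next
        case ik: False
        show ?thesis
        proof (cases "j = k")
          case True
          then show ?thesis using ik g by (simp add: Hij c_def g_def)
        next
          case jk: False
          show ?thesis
          proof (cases "i \<notin> I")
            case True
            then have "G$i$j = 0" "G$i$k = 0" using Z ij ik jk insert.hyps by auto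
            then show ?thesis using ik by (simp add: Hij c_def)
          next
            case False
            then have jI: "j \<notin> I" using ij by auto
            then have "G$i$j = 0" "G$k$j = 0" "G$j$k = 0" using Z ij ik jk insert.hyps by auto
            then show ?thesis using jk by (simp add: Hij c_def)
          qed
        qed
      qed
    qed
    have IH: "0 < det H \<and> det H \<le> (\<Prod>i\<in>UNIV. H$i$i)" using insert.IH Hpd HZ by blast
    have dH: "det H = det G" unfolding H_def by (simp add: det_mul dL)
    have Hii: "H$i$i \<le> G$i$i" for i
    proof (cases "i = k")
      case True then show ?thesis by (simp add: Hij ck)
    next
      case False
      have "H$i$i = G$i$i - (G$i$k)^2 / g"
        using False g by (simp add: Hij c_def sym[of k i] g_def field_simps power2_eq_square)
      then show ?thesis using g by simp
    qed
    have "(\<Prod>i\<in>UNIV. H$i$i) \<le> (\<Prod>i\<in>UNIV. G$i$i)"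
      using Hii pos_def_diag_pos[OF Hpd] by (intro prod_mono) (auto intro: less_imp_le)
    then show "0 < det G" "det G \<le> (\<Prod>i\<in>UNIV. G$i$i)" using IH dH by auto
  qed
qed

lemma hadamard:
  fixes G :: "real^'n^'n"
  assumes "pos_def G"
  shows "0 < det G" "det G \<le> (\<Prod>i\<in>UNIV. G$i$i)"
  using hadamard_aux[of "UNIV :: 'n set"] assms by auto



lemma trace_sample_cov:
  fixes K :: "real^'n^'n"
  shows "trace (K ** sample_cov n X) = (1/real n) * (\<Sum>s<n. X s \<bullet> (K *v X s))"
proof -
  have S: "sample_cov n X $ j $ i = (1/real n) * (\<Sum>s<n. X s $ j * X s $ i)" for i j
    by (simp add: sample_cov_def outer_def sum_component)
  have "trace (K ** sample_cov n X) = (\<Sum>i\<in>UNIV. \<Sum>j\<in>UNIV. K$i$j * ((1/real n) * (\<Sum>s<n. X s $ j * X s $ i)))"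
    by (simp add: trace_def matrix_matrix_mult_def S)
  also have "\<dots> = (1/real n) * (\<Sum>i\<in>UNIV. \<Sum>j\<in>UNIV. \<Sum>s<n. X s $ i * (K$i$j * X s $ j))"
    by (simp add: sum_distrib_left mult_ac)
  also have "(\<Sum>i\<in>UNIV. \<Sum>j\<in>UNIV. \<Sum>s<n. X s $ i * (K$i$j * X s $ j))
      = (\<Sum>i\<in>UNIV. \<Sum>s<n. \<Sum>j\<in>UNIV. X s $ i * (K$i$j * X s $ j))"
    by (rule sum.cong[OF refl], rule sum.swap)
  also have "\<dots> = (\<Sum>s<n. \<Sum>i\<in>UNIV. \<Sum>j\<in>UNIV. X s $ i * (K$i$j * X s $ j))"
    by (rule sum.swap)
  also have "\<dots> = (\<Sum>s<n. X s \<bullet> (K *v X s))"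
    by (simp add: inner_vec_def matrix_vector_mult_def sum_distrib_left)
  finally show ?thesis .
qed

lemma congr_diag:
  fixes A B :: "real^'n^'n"
  shows "(transpose A ** B ** A) $ j $ j = column j A \<bullet> (B *v column j A)"
proof -
  have "(transpose A ** B ** A) $ j $ j = (\<Sum>b\<in>UNIV. (\<Sum>a\<in>UNIV. A$a$j * B$a$b) * A$b$j)"
    by (simp add: matrix_matrix_mult_def transpose_def)
  also have "\<dots> = (\<Sum>b\<in>UNIV. \<Sum>a\<in>UNIV. A$a$j * (B$a$b * A$b$j))"
    by (simp add: sum_distrib_right sum_distrib_left mult_ac)
  also have "\<dots> = (\<Sum>a\<in>UNIV. \<Sum>b\<in>UNIV. A$a$j * (B$a$b * A$b$j))"
    by (rule sum.swap)
  also have "\<dots> = column j A \<bullet> (B *v column j A)"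
    by (simp add: inner_vec_def matrix_vector_mult_def column_def sum_distrib_left)
  finally show ?thesis .
qed

lemma pos_def_inv:
  fixes S :: "real^'n^'n"
  assumes "pos_def S"
  shows "invertible S" "pos_def (matrix_inv S)" "det (matrix_inv S) = 1 / det S"
proof -
  have dS: "det S > 0" by (rule hadamard(1)[OF assms])
  then show inv: "invertible S" by (simp add: invertible_det_nz)
  let ?K = "matrix_inv S"
  have r: "S ** ?K = mat 1" and l: "?K ** S = mat 1" using matrix_inv_both[OF inv] by auto
  have "det (S ** ?K) = 1" using r by simp
  then have "det S * det ?K = 1" by (simp add: det_mul)
  then show "det ?K = 1 / det S" using dS by (simp add: field_simps)
  have tS: "transpose S = S" using assms unfolding pos_def_def by simp
  have "transpose (S ** ?K) = mat 1" using r by (simp add: transpose_mat)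
  then have tKS: "transpose ?K ** S = mat 1" by (simp add: matrix_transpose_mul tS)
  have "transpose ?K = transpose ?K ** (S ** ?K)" using r by simp
  also have "\<dots> = (transpose ?K ** S) ** ?K" by (simp add: matrix_mul_assoc)
  also have "\<dots> = ?K" using tKS by simp
  finally have tK: "transpose ?K = ?K" .
  have invK: "invertible ?K" unfolding invertible_def using r l by blast
  have "?K ** S ** transpose ?K = ?K" using l tK by (simp add: matrix_mul_lid)
  then show "pos_def ?K" using pos_def_congr[OF assms invK] by simp
qed

lemma loglik_bounded:
  fixes X :: "nat \<Rightarrow> real^'n" and \<tau> :: "'n \<Rightarrow> nat"
  assumes tn: "\<And>j. \<tau> j < n" and inj: "inj \<tau>" and dX: "det (\<chi> i j. X (\<tau> j) $ i) \<noteq> 0"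
  shows "\<exists>C. \<forall>\<Sigma>. pos_def \<Sigma> \<longrightarrow> loglik \<Sigma> (sample_cov n X) \<le> C"
proof -
  define Xm :: "real^'n^'n" where "Xm = (\<chi> i j. X (\<tau> j) $ i)"
  define d where "d = det Xm"
  have d0: "d \<noteq> 0" using dX by (simp add: d_def Xm_def)
  have npos: "n > 0" using tn[of undefined] by simp
  have colX: "column j Xm = X (\<tau> j)" for j by (simp add: column_def Xm_def vec_eq_iff)
  have invXt: "invertible (transpose Xm)" using d0 by (simp add: invertible_det_nz d_def)
  show ?thesis
  proof (intro exI allI impI)
    fix \<Sigma> :: "real^'n^'n" assume Sp: "pos_def \<Sigma>"
    define K where "K = matrix_inv \<Sigma>"
    have dS: "det \<Sigma> > 0" by (rule hadamard(1)[OF Sp])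
    have Kp: "pos_def K" and dK: "det K = 1 / det \<Sigma>" using pos_def_inv[OF Sp] by (auto simp: K_def)
    define G where "G = transpose Xm ** K ** Xm"
    have Gp: "pos_def G" using pos_def_congr[OF Kp invXt] by (simp add: G_def)
    have Gjj: "G$j$j = X (\<tau> j) \<bullet> (K *v X (\<tau> j))" for j
      unfolding G_def congr_diag colX ..
    have Gpos: "G$j$j > 0" for j by (rule pos_def_diag_pos[OF Gp])
    have dG: "det G = d^2 / det \<Sigma>"
      unfolding G_def det_mul det_transpose dK d_def by (simp add: power2_eq_square)
    have q0: "X s \<bullet> (K *v X s) \<ge> 0" for s
      using Kp unfolding pos_def_def by (cases "X s = 0") (auto intro: less_imp_le)
    have "(\<Sum>j\<in>UNIV. G$j$j) = (\<Sum>s\<in>\<tau> ` UNIV. X s \<bullet> (K *v X s))"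
      using inj by (simp add: sum.reindex Gjj)
    also have "\<dots> \<le> (\<Sum>s<n. X s \<bullet> (K *v X s))"
      using tn q0 by (intro sum_mono2) auto
    finally have tr: "(\<Sum>j\<in>UNIV. G$j$j) \<le> (\<Sum>s<n. X s \<bullet> (K *v X s))" .
    have "ln (det G) \<le> ln (\<Prod>j\<in>UNIV. G$j$j)"
      using hadamard[OF Gp] by simp
    also have "\<dots> = (\<Sum>j\<in>UNIV. ln (G$j$j))" by (rule ln_prod) (simp, metis Gpos less_irrefl)
    also have "\<dots> \<le> (\<Sum>j\<in>UNIV. ln (real n) + G$j$j / real n - 1)"
    proof (rule sum_mono)
      fix j
      have "ln (G$j$j / real n) \<le> G$j$j / real n - 1" using Gpos[of j] npos by (intro ln_le_minus_one) simp
      then show "ln (G$j$j) \<le> ln (real n) + G$j$j / real n - 1"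
        using Gpos[of j] npos by (simp add: ln_div)
    qed
    also have "\<dots> = (\<Sum>j\<in>UNIV. (ln (real n) - 1) + G$j$j / real n)"
      by (rule sum.cong) auto
    also have "\<dots> = (\<Sum>j\<in>(UNIV::'n set). (ln (real n) - 1)) + (\<Sum>j\<in>UNIV. G$j$j / real n)"
      by (rule sum.distrib)
    also have "\<dots> = real CARD('n) * (ln (real n) - 1) + (\<Sum>j\<in>UNIV. G$j$j) / real n"
      by (simp add: sum_divide_distrib[symmetric])
    finally have lnG: "ln (det G) \<le> real CARD('n) * (ln (real n) - 1) + (\<Sum>j\<in>UNIV. G$j$j) / real n" .
    have "ln (det G) = ln (d^2) - ln (det \<Sigma>)" using dS d0 by (simp add: dG ln_div)
    then have A: "- ln (det \<Sigma>) \<le> real CARD('n) * (ln (real n) - 1) + (\<Sum>j\<in>UNIV. G$j$j) / real n - ln (d^2)"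
      using lnG by linarith
    have "(\<Sum>j\<in>UNIV. G$j$j) / real n \<le> (\<Sum>s<n. X s \<bullet> (K *v X s)) / real n"
      using tr npos by (intro divide_right_mono) auto
    also have "\<dots> = trace (K ** sample_cov n X)" unfolding trace_sample_cov by simp
    finally have B: "(\<Sum>j\<in>UNIV. G$j$j) / real n \<le> trace (K ** sample_cov n X)" .
    have "loglik \<Sigma> (sample_cov n X) = - ln (det \<Sigma>) - trace (K ** sample_cov n X)"
      by (simp add: loglik_def K_def)
    then show "loglik \<Sigma> (sample_cov n X) \<le> real CARD('n) * (ln (real n) - 1) - ln (d^2)"
      using A B by linarith
  qed
qed

lemma max_loglik_finite:
  fixes X :: "nat \<Rightarrow> real^'n" and \<tau> :: "'n \<Rightarrow> nat"
  assumes "\<And>j. \<tau> j < n" "inj \<tau>" "det (\<chi> i j. X (\<tau> j) $ i) \<noteq> 0"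
  shows "max_loglik B (sample_cov n X) < \<infinity>"
proof -
  obtain C where C: "\<And>\<Sigma>. pos_def \<Sigma> \<Longrightarrow> loglik \<Sigma> (sample_cov n X) \<le> C"
    using loglik_bounded[OF assms] by blast
  have "max_loglik B (sample_cov n X) \<le> ereal C"
    unfolding max_loglik_def
  proof (rule SUP_least)
    fix \<Sigma> assume "\<Sigma> \<in> PD B"
    then have "pos_def \<Sigma>" by (simp add: PD_def)
    then show "ereal (loglik \<Sigma> (sample_cov n X)) \<le> ereal C" using C by simp
  qed
  moreover have "ereal C < \<infinity>" by simp
  ultimately show ?thesis by (rule le_less_trans)
qed



definition uvec :: "real^'n \<Rightarrow> 'n \<Rightarrow> 'n \<Rightarrow> real^'n" where
  "uvec w i j = (\<chi> l. (if l = i then w$j else 0) - (if l = j then w$i else 0))"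

definition Eset :: "'n set set \<Rightarrow> ('n \<times> 'n) set" where
  "Eset B = {(i, j). {i, j} \<in> B}"

definition Sig0 :: "'n::finite set set \<Rightarrow> real^'n \<Rightarrow> real^'n^'n" where
  "Sig0 B w = (\<Sum>e\<in>Eset B. outer (uvec w (fst e) (snd e)))"

lemma inner_uvec: "z \<bullet> uvec w i j = z$i * w$j - z$j * w$i"
proof -
  have "z \<bullet> uvec w i j = (\<Sum>l\<in>UNIV. (if l = i then z$l * w$j else 0) - (if l = j then z$l * w$i else 0))"
    unfolding inner_vec_def uvec_def by (rule sum.cong) (auto simp: algebra_simps)
  also have "\<dots> = z$i * w$j - z$j * w$i" by (simp add: sum_subtractf)
  finally show ?thesis .
qed

lemma outer_mv: "outer u *v v = (u \<bullet> v) *\<^sub>R u"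
  by (simp add: outer_def matrix_vector_mult_def vec_eq_iff inner_vec_def sum_distrib_left mult_ac)

lemma sum_mv: "(sum A S) *v (v::real^'n) = sum (\<lambda>e. A e *v v) S"
  by (induction S rule: infinite_finite_induct) (simp_all add: matrix_vector_mult_add_rdistrib)

lemma Sig0_mv: "Sig0 B w *v v = (\<Sum>e\<in>Eset B. (uvec w (fst e) (snd e) \<bullet> v) *\<^sub>R uvec w (fst e) (snd e))"
  unfolding Sig0_def sum_mv outer_mv ..

lemma Sig0_quad: "z \<bullet> (Sig0 B w *v v) = (\<Sum>e\<in>Eset B. (uvec w (fst e) (snd e) \<bullet> z) * (uvec w (fst e) (snd e) \<bullet> v))"
  unfolding Sig0_mv inner_sum_right by (simp add: inner_commute mult_ac)

lemma Sig0_entry: "Sig0 B w $ a $ b = (\<Sum>e\<in>Eset B. uvec w (fst e) (snd e) $ a * uvec w (fst e) (snd e) $ b)"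
  by (simp add: Sig0_def sum_component outer_def)

lemma Sig0_sym: "transpose (Sig0 B w) = Sig0 B w"
  by (simp add: vec_eq_iff transpose_def Sig0_entry mult.commute)

lemma Sig0_pattern:
  assumes "a \<noteq> b" "{a, b} \<notin> B"
  shows "Sig0 B w $ a $ b = 0"
  unfolding Sig0_entry
proof (rule sum.neutral, safe)
  fix i j assume ij: "(i, j) \<in> Eset B"
  then have "{i, j} \<in> B" by (simp add: Eset_def)
  have "{a, b} \<noteq> {i, j}" using assms \<open>{i,j} \<in> B\<close> by auto
  then show "uvec w (fst (i, j)) (snd (i, j)) $ a * uvec w (fst (i, j)) (snd (i, j)) $ b = 0"
    using assms(1) by (auto simp: uvec_def doubleton_eq_iff)
qed

lemma uvec_w: "uvec w i j \<bullet> w = 0"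
  by (simp add: inner_commute[of _ w] inner_uvec mult.commute)

definition Sige :: "'n::finite set set \<Rightarrow> real^'n \<Rightarrow> real \<Rightarrow> real^'n^'n" where
  "Sige B w e = Sig0 B w + e *\<^sub>R mat 1"

lemma Sige_quad: "z \<bullet> (Sige B w e *v v) = z \<bullet> (Sig0 B w *v v) + e * (z \<bullet> v)"
  by (simp add: Sige_def matrix_vector_mult_add_rdistrib scaleR_matrix_vector_assoc[symmetric] inner_add_right)

lemma Sig0_nonneg: "z \<bullet> (Sig0 B w *v z) \<ge> 0"
  unfolding Sig0_quad by (intro sum_nonneg) simp

lemma Sige_PD:
  fixes B :: "'n::finite set set"
  assumes "e > 0"
  shows "Sige B w e \<in> PD B"
  unfolding PD_def pos_def_def
proof safe
  show "transpose (Sige B w e) = Sige B w e"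
    by (simp add: Sige_def vec_eq_iff transpose_def Sig0_sym[unfolded vec_eq_iff transpose_def, simplified] mat_def)
next
  fix x :: "real^'n" assume "x \<noteq> 0"
  then have "x \<bullet> x > 0" by simp
  then show "0 < x \<bullet> (Sige B w e *v x)"
    unfolding Sige_quad using Sig0_nonneg[of x B w] assms by (simp add: add_nonneg_pos)
next
  fix i j assume "i \<noteq> j" "{i, j} \<notin> B"
  then show "Sige B w e $ i $ j = 0" by (simp add: Sige_def Sig0_pattern mat_def)
qed

lemma Sig0_det: assumes "w \<noteq> 0" shows "det (Sig0 B w) = 0"
proof -
  have "Sig0 B w *v w = 0"
    by (simp add: Sig0_mv uvec_w)
  then have "\<not> inj ((*v) (Sig0 B w))" using assms
    by (metis injD matrix_vector_mult_0_right)
  then have "\<not> invertible (Sig0 B w)" using inj_matrix_vector_mult by blast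
  then show ?thesis by (simp add: invertible_det_nz)
qed

lemma isCont_det_shift: "isCont (\<lambda>e. det (A + e *\<^sub>R (mat 1 :: real^'n^'n))) x"
  unfolding det_def by (simp add: mat_def) (intro continuous_intros)

lemma finite_Eset: "finite (Eset (B::'n::finite set set))"
  by (rule finite_subset[OF subset_UNIV]) simp

lemma Sig0_kernel:
  fixes B :: "'n::finite set set" and w z :: "real^'n"
  assumes conn: "bg_connected B" and wnz: "\<And>i. w$i \<noteq> 0"
    and q: "z \<bullet> (Sig0 B w *v z) = 0" and zw: "z \<bullet> w = 0"
  shows "z = 0"
proof -
  have "(\<Sum>e\<in>Eset B. (uvec w (fst e) (snd e) \<bullet> z) * (uvec w (fst e) (snd e) \<bullet> z)) = 0"
    using q by (simp add: Sig0_quad)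
  then have all0: "\<forall>e\<in>Eset B. (uvec w (fst e) (snd e) \<bullet> z) * (uvec w (fst e) (snd e) \<bullet> z) = 0"
    using finite_Eset by (subst sum_nonneg_eq_0_iff[symmetric]) auto
  define \<rho> where "\<rho> i = z$i / w$i" for i
  have edge: "\<rho> i = \<rho> j" if "(i, j) \<in> Eset B" for i j
  proof -
    have "uvec w i j \<bullet> z = 0" using all0 that by fastforce
    then have "z$i * w$j - z$j * w$i = 0" by (simp add: inner_commute[of _ z] inner_uvec)
    then show ?thesis using wnz[of i] wnz[of j] by (simp add: \<rho>_def field_simps)
  qed
  have path: "\<rho> a = \<rho> b" if "(a, b) \<in> {(a, b). {a, b} \<in> B}\<^sup>*" for a b
    using that
  proof (induction rule: rtrancl_induct)
    case base then show ?case by simp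
  next
    case (step y z') then show ?case using edge[of y z'] by (simp add: Eset_def)
  qed
  obtain a :: 'n where True by blast
  have zeq: "z = \<rho> a *\<^sub>R w"
  proof (subst vec_eq_iff, intro allI)
    fix i
    have "\<rho> i = \<rho> a" using path conn unfolding bg_connected_def by metis
    then show "z$i = (\<rho> a *\<^sub>R w)$i" using wnz[of i] by (simp add: \<rho>_def field_simps)
  qed
  have "w \<noteq> 0" using wnz[of a] by auto
  then have "w \<bullet> w > 0" by simp
  moreover have "\<rho> a * (w \<bullet> w) = 0" using zw by (simp add: zeq)
  ultimately have "\<rho> a = 0" by simp
  then show ?thesis using zeq by simp
qed

lemma quad_scale: "(a *\<^sub>R z) \<bullet> (A *v (a *\<^sub>R z)) = a^2 * (z \<bullet> (A *v z))" for A :: "real^'n^'n"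
  by (simp add: matrix_vector_mult_scaleR power2_eq_square)

lemma Sig0_coercive:
  fixes B :: "'n::finite set set" and w :: "real^'n"
  assumes conn: "bg_connected B" and wnz: "\<And>i. w$i \<noteq> 0"
  shows "\<exists>c>0. \<forall>z. z \<bullet> w = 0 \<longrightarrow> c * (z \<bullet> z) \<le> z \<bullet> (Sig0 B w *v z)"
proof -
  define S where "S = sphere (0::real^'n) 1 \<inter> {z. w \<bullet> z = 0}"
  define f where "f z = z \<bullet> (Sig0 B w *v z)" for z
  have unit: "z /\<^sub>R norm z \<in> S" if "z \<bullet> w = 0" "z \<noteq> 0" for z
    using that by (simp add: S_def inner_commute)
  have scale: "f z = (norm z)^2 * f (z /\<^sub>R norm z)" if "z \<noteq> 0" for z
  proof -
    have "f z = f (norm z *\<^sub>R (z /\<^sub>R norm z))" using that by simp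
    also have "\<dots> = (norm z)^2 * f (z /\<^sub>R norm z)" unfolding f_def by (rule quad_scale)
    finally show ?thesis .
  qed
  show ?thesis
  proof (cases "S = {}")
    case True
    show ?thesis
    proof (intro exI[of _ 1] conjI allI impI)
      fix z :: "real^'n" assume "z \<bullet> w = 0"
      then have "z = 0" using unit True by blast
      then show "1 * (z \<bullet> z) \<le> z \<bullet> (Sig0 B w *v z)" by simp
    qed simp
  next
    case False
    have cS: "compact S" unfolding S_def by (intro compact_Int_closed compact_sphere closed_hyperplane)
    have cont: "continuous_on S f"
      unfolding f_def Sig0_quad by (intro continuous_intros)
    obtain z0 where z0: "z0 \<in> S" "\<And>y. y \<in> S \<Longrightarrow> f z0 \<le> f y"
      using continuous_attains_inf[OF cS False cont] by blast
    have "z0 \<noteq> 0" using z0(1) by (auto simp: S_def)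
    have "f z0 \<noteq> 0"
    proof
      assume "f z0 = 0"
      then have "z0 = 0" using Sig0_kernel[OF conn wnz, of z0] z0(1)
        by (simp add: f_def S_def inner_commute)
      then show False using \<open>z0 \<noteq> 0\<close> by simp
    qed
    moreover have "f z0 \<ge> 0" unfolding f_def by (rule Sig0_nonneg)
    ultimately have c: "f z0 > 0" by simp
    show ?thesis
    proof (intro exI[of _ "f z0"] conjI allI impI c)
      fix z :: "real^'n" assume zw: "z \<bullet> w = 0"
      show "f z0 * (z \<bullet> z) \<le> z \<bullet> (Sig0 B w *v z)"
      proof (cases "z = 0")
        case True then show ?thesis by simp
      next
        case False
        have "f z0 \<le> f (z /\<^sub>R norm z)" using z0(2) unit[OF zw False] by blast
        then have "(norm z)^2 * f z0 \<le> (norm z)^2 * f (z /\<^sub>R norm z)" by (simp add: mult_left_mono)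
        then show ?thesis using scale[OF False] by (simp add: f_def power2_norm_eq_inner mult.commute)
      qed
    qed
  qed
qed

lemma inv_bound:
  fixes B :: "'n::finite set set" and w x :: "real^'n"
  assumes c: "c > 0" and coer: "\<And>z. z \<bullet> w = 0 \<Longrightarrow> c * (z \<bullet> z) \<le> z \<bullet> (Sig0 B w *v z)"
    and e: "e > 0" and xw: "x \<bullet> w = 0" and w0: "w \<noteq> 0"
  shows "x \<bullet> (matrix_inv (Sige B w e) *v x) \<le> (x \<bullet> x) / c"
proof -
  have pd: "pos_def (Sige B w e)" using Sige_PD[OF e, of B w] by (simp add: PD_def)
  have inv: "invertible (Sige B w e)" using pos_def_inv[OF pd] by simp
  define y where "y = matrix_inv (Sige B w e) *v x"
  have Sy: "Sige B w e *v y = x"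
    using matrix_inv_both(1)[OF inv] by (simp add: y_def matrix_vector_mul_assoc)
  have xy: "x \<bullet> y = y \<bullet> (Sige B w e *v y)" using Sy by (simp add: inner_commute)
  define a where "a = (y \<bullet> w) / (w \<bullet> w)"
  define y' where "y' = y - a *\<^sub>R w"
  have ww: "w \<bullet> w > 0" using w0 by simp
  have y'w: "y' \<bullet> w = 0" using ww by (simp add: y'_def a_def inner_diff_left)
  have uy: "uvec w i j \<bullet> y = uvec w i j \<bullet> y'" for i j
    by (simp add: y'_def inner_diff_right uvec_w)
  have q: "y \<bullet> (Sig0 B w *v y) = y' \<bullet> (Sig0 B w *v y')"
    unfolding Sig0_quad uy ..
  have "y \<bullet> (Sige B w e *v y) \<ge> y \<bullet> (Sig0 B w *v y)"
    unfolding Sige_quad using e by simp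
  then have A: "c * (y' \<bullet> y') \<le> x \<bullet> y" using coer[OF y'w] q xy by linarith
  have xy': "x \<bullet> y = x \<bullet> y'" by (simp add: y'_def inner_diff_right xw)
  have CS: "x \<bullet> y' \<le> norm x * norm y'" by (rule norm_cauchy_schwarz)
  have "c * (norm y')^2 \<le> norm x * norm y'" using A xy' CS by (simp add: power2_norm_eq_inner)
  then have "c * norm y' \<le> norm x"
    by (cases "norm y' = 0") (auto simp: power2_eq_square mult.assoc[symmetric])
  then have "norm y' \<le> norm x / c" using c by (simp add: field_simps)
  then have "norm x * norm y' \<le> norm x * (norm x / c)" by (rule mult_left_mono) simp
  then have "x \<bullet> y \<le> (norm x)^2 / c" using xy' CS by (simp add: power2_eq_square)
  then show ?thesis by (simp add: y_def power2_norm_eq_inner)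
qed



lemma max_loglik_infinite:
  fixes B :: "'n::finite set set" and w :: "real^'n" and X :: "nat \<Rightarrow> real^'n"
  assumes conn: "bg_connected B" and wnz: "\<And>i. w$i \<noteq> 0" and orth: "\<And>s. s < n \<Longrightarrow> X s \<bullet> w = 0"
  shows "max_loglik B (sample_cov n X) = \<infinity>"
proof -
  obtain a :: 'n where True by blast
  have w0: "w \<noteq> 0" using wnz[of a] by auto
  obtain c where c: "c > 0" and coer: "\<And>z. z \<bullet> w = 0 \<Longrightarrow> c * (z \<bullet> z) \<le> z \<bullet> (Sig0 B w *v z)"
    using Sig0_coercive[OF conn wnz] by blast
  define T where "T = (1/real n) * (\<Sum>s<n. (X s \<bullet> X s) / c)"
  have low: "loglik (Sige B w e) (sample_cov n X) \<ge> - ln (det (Sige B w e)) - T" if e: "e > 0" for e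
  proof -
    have "trace (matrix_inv (Sige B w e) ** sample_cov n X)
        = (1/real n) * (\<Sum>s<n. X s \<bullet> (matrix_inv (Sige B w e) *v X s))"
      by (rule trace_sample_cov)
    also have "\<dots> \<le> T" unfolding T_def
      by (intro mult_left_mono sum_mono inv_bound[OF c coer e _ w0] orth) auto
    finally show ?thesis by (simp add: loglik_def)
  qed
  define f where "f = (\<lambda>e. det (Sig0 B w + e *\<^sub>R (mat 1 :: real^'n^'n)))"
  have f0: "f 0 = 0" using Sig0_det[OF w0] by (simp add: f_def)
  have lim: "f \<midarrow>0\<rightarrow> f 0" using isCont_det_shift[where A="Sig0 B w" and x=0] by (simp add: f_def isCont_def)
  have big: "\<exists>\<Sigma>\<in>PD B. r < loglik \<Sigma> (sample_cov n X)" for r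
  proof -
    define \<delta> where "\<delta> = exp (- (r + T))"
    have "\<delta> > 0" by (simp add: \<delta>_def)
    then obtain s where s: "s > 0" "\<And>x. x \<noteq> 0 \<and> norm (x - 0) < s \<Longrightarrow> norm (f x - f 0) < \<delta>"
      using LIM_D[OF lim] by blast
    define e where "e = s / 2"
    have e: "e > 0" "e \<noteq> 0" "norm (e - 0) < s" using s(1) by (auto simp: e_def)
    have fe: "f e < \<delta>" using s(2)[of e] e f0 by auto
    have pd: "pos_def (Sige B w e)" using Sige_PD[OF e(1), of B w] by (simp add: PD_def)
    have dpos: "det (Sige B w e) > 0" by (rule hadamard(1)[OF pd])
    have "det (Sige B w e) < \<delta>" using fe by (simp add: f_def Sige_def)
    then have "ln (det (Sige B w e)) < ln \<delta>" using dpos by simp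
    then have "ln (det (Sige B w e)) < - (r + T)" by (simp add: \<delta>_def)
    then have "r < loglik (Sige B w e) (sample_cov n X)" using low[OF e(1)] by linarith
    then show ?thesis using Sige_PD[OF e(1), of B w] by blast
  qed
  have "(SUP \<Sigma>\<in>PD B. ereal (loglik \<Sigma> (sample_cov n X))) = \<top>"
    unfolding Sup_eq_top_iff
  proof (intro allI impI)
    fix x :: ereal assume "x < \<top>"
    then obtain r where "x \<le> ereal r" by (cases x) auto
    obtain \<Sigma> where "\<Sigma> \<in> PD B" "r < loglik \<Sigma> (sample_cov n X)" using big by blast
    then show "\<exists>i\<in>(\<lambda>\<Sigma>. ereal (loglik \<Sigma> (sample_cov n X))) ` PD B. x < i"
      using \<open>x \<le> ereal r\<close> by (intro bexI[of _ "ereal (loglik \<Sigma> (sample_cov n X))"]) (auto intro: le_less_trans)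
  qed
  then show ?thesis by (simp add: max_loglik_def top_ereal_def)
qed



definition colmat :: "('p::finite \<Rightarrow> real^'p) \<Rightarrow> 'p set \<Rightarrow> ('p \<Rightarrow> nat) \<Rightarrow> (nat \<Rightarrow> real^'p) \<Rightarrow> real^'p^'p" where
  "colmat F J \<tau> X = (\<chi> i j. (if j \<in> J then X (\<tau> j) else F j) $ i)"

lemma meas_comp_nth:
  fixes M :: "(real^'p::finite) measure"
  assumes sM: "sets M = sets lborel" and k: "k \<in> I"
  shows "(\<lambda>X. X k $ i) \<in> borel_measurable (PiM I (\<lambda>_. M))"
proof -
  have "(\<lambda>x::real^'p. x $ i) \<in> borel_measurable M"
  proof -
    have "(\<lambda>x::real^'p. x $ i) \<in> borel_measurable borel"
      by (intro borel_measurable_continuous_onI continuous_intros)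
    then have "(\<lambda>x::real^'p. x $ i) \<in> borel_measurable lborel" by simp
    then show ?thesis by (subst measurable_cong_sets[OF sM refl])
  qed
  then show ?thesis
    by (rule measurable_compose[OF measurable_component_singleton[OF k]])
qed

lemma meas_det_colmat:
  fixes M :: "(real^'p::finite) measure"
  assumes sM: "sets M = sets lborel" and JI: "\<tau> ` J \<subseteq> I"
  shows "(\<lambda>X. det (colmat F J \<tau> X)) \<in> borel_measurable (PiM I (\<lambda>_. M))"
proof -
  have ent: "(\<lambda>X. colmat F J \<tau> X $ i $ j) \<in> borel_measurable (PiM I (\<lambda>_. M))" for i j
  proof (cases "j \<in> J")
    case True
    then have "\<tau> j \<in> I" using JI by auto
    then show ?thesis using True meas_comp_nth[OF sM] by (simp add: colmat_def)
  next
    case False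
    then show ?thesis by (simp add: colmat_def)
  qed
  show ?thesis unfolding det_def
    by (intro borel_measurable_sum borel_measurable_times borel_measurable_prod borel_measurable_const ent)
qed

lemma hyper_null:
  fixes M :: "(real^'p::finite) measure"
  assumes sM: "sets M = sets lborel" and ac: "absolutely_continuous lborel M" and r: "r \<noteq> 0"
  shows "AE y in M. r \<bullet> y \<noteq> 0"
proof -
  define H where "H = {y::real^'p. r \<bullet> y = 0}"
  have "negligible H" unfolding H_def using r by (intro negligible_hyperplane) simp
  then have Hl: "H \<in> null_sets lebesgue" by (simp add: negligible_iff_null_sets)
  have "closed H" unfolding H_def by (rule closed_hyperplane)
  then have Hb: "H \<in> sets lborel" by simp
  have "H \<in> null_sets lborel" using Hl null_sets_completion_iff[OF Hb] by simp
  then have "H \<in> null_sets M" using ac by (auto simp: absolutely_continuous_def)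
  then have "AE y in M. y \<notin> H" by (rule AE_not_in)
  then show ?thesis by (simp add: H_def)
qed

lemma mv_component_row: "(K *v y) $ j = row j K \<bullet> (y::real^'p::finite)"
  by (simp add: matrix_vector_mult_def row_def inner_vec_def)

lemma col_replace:
  fixes A :: "real^('p::finite)^'p"
  assumes dA: "det A \<noteq> 0"
  shows "det (\<chi> i k. if k = j then y $ i else A$i$k) = (row j (matrix_inv A) \<bullet> y) * det A"
    and "row j (matrix_inv A) \<noteq> 0"
proof -
  have inv: "invertible A" using dA by (simp add: invertible_det_nz)
  have Ay: "A *v (matrix_inv A *v y) = y" for y
    using matrix_inv_both(1)[OF inv] by (simp add: matrix_vector_mul_assoc)
  have cr: "det (\<chi> i k. if k = j then y $ i else A$i$k) = (row j (matrix_inv A) \<bullet> y) * det A" for y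
    using cramer_lemma[where A=A and x="matrix_inv A *v y" and k=j] unfolding Ay mv_component_row .
  then show "det (\<chi> i k. if k = j then y $ i else A$i$k) = (row j (matrix_inv A) \<bullet> y) * det A" .
  have "(\<chi> i k. if k = j then column j A $ i else A$i$k) = A"
    by (simp add: vec_eq_iff column_def)
  then have "det A = (row j (matrix_inv A) \<bullet> column j A) * det A" using cr[of "column j A"] by simp
  then have "row j (matrix_inv A) \<bullet> column j A = 1" using dA by simp
  then show "row j (matrix_inv A) \<noteq> 0" by auto
qed

lemma D_aux:
  fixes M :: "(real^'p::finite) measure" and F :: "'p \<Rightarrow> real^'p" and \<tau> :: "'p \<Rightarrow> nat"
  assumes P: "prob_space M" and sM: "sets M = sets lborel" and ac: "absolutely_continuous lborel M"
    and dF: "det (\<chi> i j. F j $ i) \<noteq> 0" and fJ: "finite J"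
  shows "finite I \<Longrightarrow> inj_on \<tau> J \<Longrightarrow> \<tau> ` J \<subseteq> I \<Longrightarrow>
    AE X in PiM I (\<lambda>_. M). det (colmat F J \<tau> X) \<noteq> 0"
  using fJ
proof (induction J arbitrary: I rule: finite_induct)
  case empty
  have "colmat F {} \<tau> X = (\<chi> i j. F j $ i)" for X by (simp add: colmat_def)
  then show ?case using dF by simp
next
  case (insert j J I)
  interpret M: prob_space M by (rule P)
  define i0 where "i0 = \<tau> j"
  have i0I: "i0 \<in> I" using insert.prems by (simp add: i0_def)
  have tJ: "\<tau> k \<noteq> i0" if "k \<in> J" for k
    using insert.prems(2) insert.hyps(2) that by (auto simp: i0_def inj_on_def)
  have JI: "\<tau> ` J \<subseteq> I - {i0}" using insert.prems(3) tJ by auto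
  define N where "N = PiM (I - {i0}) (\<lambda>_. M)"
  have IH: "AE X' in N. det (colmat F J \<tau> X') \<noteq> 0"
    unfolding N_def using insert.prems JI by (intro insert.IH) (auto simp: inj_on_insert)
  interpret N: prob_space N unfolding N_def by (intro prob_space_PiM) (simp add: P)
  interpret MN: pair_sigma_finite M N by unfold_locales
  define upd where "upd = (\<lambda>z::(real^'p) \<times> (nat \<Rightarrow> real^'p). (snd z)(i0 := fst z))"
  have II: "insert i0 (I - {i0}) = I" using i0I by auto
  have eq: "PiM I (\<lambda>_. M) = distr (M \<Otimes>\<^sub>M N) (PiM I (\<lambda>_. M)) upd"
  proof -
    have "distr (M \<Otimes>\<^sub>M N) (PiM (insert i0 (I - {i0})) (\<lambda>_. M)) (\<lambda>(x, X). X(i0 := x))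
        = PiM (insert i0 (I - {i0})) (\<lambda>_. M)"
      unfolding N_def by (rule distr_pair_PiM_eq_PiM) (simp_all add: P)
    moreover have "(\<lambda>(x, X). X(i0 := x)) = upd" by (auto simp: upd_def)
    ultimately show ?thesis using II by simp
  qed
  have upd_meas: "upd \<in> M \<Otimes>\<^sub>M N \<rightarrow>\<^sub>M PiM I (\<lambda>_. M)"
  proof -
    have "(\<lambda>(f, y). f(i0 := y)) \<in> N \<Otimes>\<^sub>M M \<rightarrow>\<^sub>M PiM (insert i0 (I - {i0})) (\<lambda>_. M)"
      unfolding N_def by (rule measurable_add_dim)
    then have "(\<lambda>(f, y). f(i0 := y)) \<in> N \<Otimes>\<^sub>M M \<rightarrow>\<^sub>M PiM I (\<lambda>_. M)" using II by simp
    then have "(\<lambda>(f, y). f(i0 := y)) \<circ> (\<lambda>(x, y). (y, x)) \<in> M \<Otimes>\<^sub>M N \<rightarrow>\<^sub>M PiM I (\<lambda>_. M)"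
      by (rule measurable_comp[OF measurable_pair_swap'])
    moreover have "(\<lambda>(f, y). f(i0 := y)) \<circ> (\<lambda>(x, y). (y, x)) = upd" by (auto simp: upd_def)
    ultimately show ?thesis by simp
  qed
  define g where "g = (\<lambda>X. det (colmat F (insert j J) \<tau> X))"
  have g_meas: "g \<in> borel_measurable (PiM I (\<lambda>_. M))"
    unfolding g_def using insert.prems(3) by (intro meas_det_colmat[OF sM])
  have setP: "{X \<in> space (PiM I (\<lambda>_. M)). g X \<noteq> 0} \<in> sets (PiM I (\<lambda>_. M))"
  proof -
    have "g -` (- {0}) \<inter> space (PiM I (\<lambda>_. M)) \<in> sets (PiM I (\<lambda>_. M))"
      by (rule measurable_sets[OF g_meas]) simp
    moreover have "g -` (- {0}) \<inter> space (PiM I (\<lambda>_. M)) = {X \<in> space (PiM I (\<lambda>_. M)). g X \<noteq> 0}" by auto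
    ultimately show ?thesis by simp
  qed
  have gu_meas: "(\<lambda>z. g (upd z)) \<in> borel_measurable (M \<Otimes>\<^sub>M N)"
    using measurable_comp[OF upd_meas g_meas] by (simp add: comp_def)
  have setP2: "{z \<in> space (M \<Otimes>\<^sub>M N). g (upd (fst z, snd z)) \<noteq> 0} \<in> sets (M \<Otimes>\<^sub>M N)"
  proof -
    have "(\<lambda>z. g (upd z)) -` (- {0}) \<inter> space (M \<Otimes>\<^sub>M N) \<in> sets (M \<Otimes>\<^sub>M N)"
      by (rule measurable_sets[OF gu_meas]) simp
    moreover have "(\<lambda>z. g (upd z)) -` (- {0}) \<inter> space (M \<Otimes>\<^sub>M N) = {z \<in> space (M \<Otimes>\<^sub>M N). g (upd (fst z, snd z)) \<noteq> 0}" by auto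
    ultimately show ?thesis by simp
  qed
  have inner: "AE X' in N. AE x in M. g (upd (x, X')) \<noteq> 0"
    using IH
  proof (rule eventually_mono)
    fix X' assume dA: "det (colmat F J \<tau> X') \<noteq> 0"
    define A where "A = colmat F J \<tau> X'"
    have colA: "colmat F (insert j J) \<tau> (X'(i0 := x)) = (\<chi> i k. if k = j then x $ i else A$i$k)" for x
      using tJ insert.hyps(2) by (auto simp: vec_eq_iff colmat_def A_def i0_def)
    have "AE x in M. row j (matrix_inv A) \<bullet> x \<noteq> 0"
      using col_replace(2)[of A j] dA by (intro hyper_null[OF sM ac]) (simp add: A_def)
    then show "AE x in M. g (upd (x, X')) \<noteq> 0"
    proof (rule eventually_mono)
      fix x assume "row j (matrix_inv A) \<bullet> x \<noteq> 0"
      then show "g (upd (x, X')) \<noteq> 0"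
        using col_replace(1)[of A j x] dA by (simp add: g_def upd_def colA A_def)
    qed
  qed
  have "AE x in M. AE X' in N. g (upd (x, X')) \<noteq> 0"
    using inner MN.AE_commute[of "\<lambda>x X'. g (upd (x, X')) \<noteq> 0", OF setP2] by simp
  then have "AE z in M \<Otimes>\<^sub>M N. g (upd z) \<noteq> 0"
    using MN.AE_pair_measure[of "\<lambda>z. g (upd z) \<noteq> 0"] setP2 by simp
  then have "AE X in distr (M \<Otimes>\<^sub>M N) (PiM I (\<lambda>_. M)) upd. g X \<noteq> 0"
    using AE_distr_iff[OF upd_meas setP] by simp
  then show ?case unfolding g_def by (subst eq) 
qed



lemma exists_w:
  fixes X :: "nat \<Rightarrow> real^'p::finite"
  assumes "\<And>i. \<exists>a. (\<forall>s<n. X s \<bullet> a = 0) \<and> a$i \<noteq> 0"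
  shows "\<exists>w. (\<forall>s<n. X s \<bullet> w = 0) \<and> (\<forall>i. w$i \<noteq> 0)"
proof -
  have "\<exists>v. (\<forall>s<n. X s \<bullet> v = 0) \<and> (\<forall>i\<in>K. v$i \<noteq> 0)" if "finite K" for K :: "'p set"
    using that
  proof (induction K rule: finite_induct)
    case empty
    show ?case by (intro exI[of _ 0]) simp
  next
    case (insert k K)
    obtain v where v: "\<forall>s<n. X s \<bullet> v = 0" "\<forall>i\<in>K. v$i \<noteq> 0" using insert.IH by blast
    obtain a where a: "\<forall>s<n. X s \<bullet> a = 0" "a$k \<noteq> 0" using assms by blast
    have "\<exists>t::real. t \<notin> (\<lambda>i. - v$i / a$i) ` insert k K"
      by (rule ex_new_if_finite) (simp_all add: insert.hyps infinite_UNIV_char_0)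
    then obtain t where t: "t \<notin> (\<lambda>i. - v$i / a$i) ` insert k K" by blast
    show ?case
    proof (intro exI[of _ "v + t *\<^sub>R a"] conjI allI impI ballI)
      fix s assume "s < n"
      then show "X s \<bullet> (v + t *\<^sub>R a) = 0" using v a by (simp add: inner_add_right)
    next
      fix i assume i: "i \<in> insert k K"
      show "(v + t *\<^sub>R a) $ i \<noteq> 0"
      proof (cases "a$i = 0")
        case True
        then have "i \<in> K" using i a(2) by auto
        then show ?thesis using v(2) True by simp
      next
        case False
        show ?thesis
        proof
          assume "(v + t *\<^sub>R a) $ i = 0"
          then have "t = - v$i / a$i" using False by (simp add: field_simps)
          then show False using t i by auto
        qed
      qed
    qed
  qed
  from this[of UNIV] show ?thesis by simp
qed

lemma row_col_mult: "row i K \<bullet> column k A = (K ** A) $ i $ k" for K A :: "real^'p::finite^'p"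
  by (simp add: row_def column_def inner_vec_def matrix_matrix_mult_def)

lemma det_axis_cols: "det (\<chi> i j. (axis j 1 :: real^'p::finite) $ i) = 1"
proof -
  have "(\<chi> i j. (axis j 1 :: real^'p) $ i) = mat 1" by (simp add: vec_eq_iff axis_def mat_def)
  then show ?thesis by simp
qed

lemma det_axis_nz: "det (\<chi> i j. (axis j 1 :: real^'p::finite) $ i) \<noteq> 0"
  by (simp add: det_axis_cols)

lemma AE_finite_case:
  fixes M :: "(real^'p::finite) measure" and B :: "'p set set"
  assumes P: "prob_space M" and sM: "sets M = sets lborel" and ac: "absolutely_continuous lborel M"
    and n: "CARD('p) \<le> n"
  shows "AE X in sample_measure n M. max_loglik B (sample_cov n X) < \<infinity>"
proof -
  obtain \<tau> where bij: "bij_betw \<tau> (UNIV::'p set) {0..<card (UNIV::'p set)}"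
    using ex_bij_betw_finite_nat[of "UNIV::'p set"] by auto
  have inj: "inj \<tau>" using bij by (simp add: bij_betw_def)
  have tn: "\<tau> j < n" for j
  proof -
    have "\<tau> j < CARD('p)" using bij_betwE[OF bij] by auto
    then show ?thesis using n by simp
  qed
  have "AE X in PiM {..<n} (\<lambda>_. M). det (colmat (\<lambda>j. axis j 1) UNIV \<tau> X) \<noteq> 0"
    using tn by (intro D_aux[OF P sM ac det_axis_nz]) (auto simp: inj)
  then show ?thesis unfolding sample_measure_def
  proof (rule eventually_mono)
    fix X assume "det (colmat (\<lambda>j. axis j 1) UNIV \<tau> X) \<noteq> 0"
    then have "det (\<chi> i j. X (\<tau> j) $ i) \<noteq> 0" by (simp add: colmat_def)
    then show "max_loglik B (sample_cov n X) < \<infinity>"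
      using max_loglik_finite[OF tn inj] by blast
  qed
qed

lemma AE_infinite_case:
  fixes M :: "(real^'p::finite) measure" and B :: "'p set set"
  assumes P: "prob_space M" and sM: "sets M = sets lborel" and ac: "absolutely_continuous lborel M"
    and conn: "bg_connected B" and n: "n < CARD('p)"
  shows "AE X in sample_measure n M. max_loglik B (sample_cov n X) = \<infinity>"
proof -
  have one: "AE X in PiM {..<n} (\<lambda>_. M). \<exists>a. (\<forall>s<n. X s \<bullet> a = 0) \<and> a$i \<noteq> 0" for i
  proof -
    have "n \<le> card (UNIV - {i})" using n by (simp add: card_Diff_singleton)
    then obtain J where J: "J \<subseteq> UNIV - {i}" "card J = n" "finite J"
      by (rule obtain_subset_with_card_n)
    obtain \<tau> where bij: "bij_betw \<tau> J {0..<card J}" using ex_bij_betw_finite_nat[OF J(3)] by auto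
    have inj: "inj_on \<tau> J" and img: "\<tau> ` J = {..<n}" using bij J(2) by (auto simp: bij_betw_def)
    have "AE X in PiM {..<n} (\<lambda>_. M). det (colmat (\<lambda>j. axis j 1) J \<tau> X) \<noteq> 0"
      using inj img by (intro D_aux[OF P sM ac det_axis_nz J(3)]) auto
    then show ?thesis
    proof (rule eventually_mono)
      fix X assume dA: "det (colmat (\<lambda>j. axis j 1) J \<tau> X) \<noteq> 0"
      define A where "A = colmat (\<lambda>j. axis j 1) J \<tau> X"
      have inv: "invertible A" using dA by (simp add: A_def invertible_det_nz)
      have KA: "matrix_inv A ** A = mat 1" using matrix_inv_both(2)[OF inv] .
      define a where "a = row i (matrix_inv A)"
      have iJ: "i \<notin> J" using J(1) by auto
      have orth: "X s \<bullet> a = 0" if "s < n" for s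
      proof -
        have "s \<in> \<tau> ` J" using img that by simp
        then obtain k where k: "k \<in> J" "\<tau> k = s" by blast
        have "column k A = X s" using k by (simp add: A_def colmat_def column_def vec_eq_iff)
        moreover have "k \<noteq> i" using k iJ by auto
        ultimately show ?thesis using row_col_mult[of i "matrix_inv A" k A] KA
          by (simp add: a_def inner_commute mat_def)
      qed
      have "column i A = axis i 1" using iJ by (simp add: A_def colmat_def column_def vec_eq_iff)
      then have "a \<bullet> axis i 1 = 1" using row_col_mult[of i "matrix_inv A" i A] KA
        by (simp add: a_def mat_def)
      then have "a$i \<noteq> 0" by (simp add: inner_axis)
      then show "\<exists>a. (\<forall>s<n. X s \<bullet> a = 0) \<and> a$i \<noteq> 0" using orth by blast
    qed
  qed
  have "AE X in PiM {..<n} (\<lambda>_. M). \<forall>i. \<exists>a. (\<forall>s<n. X s \<bullet> a = 0) \<and> a$i \<noteq> 0"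
    by (rule eventually_all_finite) (rule one)
  then show ?thesis unfolding sample_measure_def
  proof (rule eventually_mono)
    fix X :: "nat \<Rightarrow> real^'p" assume h: "\<forall>i. \<exists>a. (\<forall>s<n. X s \<bullet> a = 0) \<and> a$i \<noteq> 0"
    have "\<exists>w. (\<forall>s<n. X s \<bullet> w = 0) \<and> (\<forall>i. w$i \<noteq> 0)" using h by (intro exists_w) blast
    then obtain w where w: "\<forall>s<n. X s \<bullet> w = 0" "\<forall>i. w$i \<noteq> 0" by blast
    show "max_loglik B (sample_cov n X) = \<infinity>"
      using w by (intro max_loglik_infinite[OF conn]) auto
  qed
qed



theorem theorem5:
  fixes B :: "'p::finite set set" and M :: "(real^'p) measure"
  assumes "bidirected_edges B" and "bg_connected B"
    and "prob_space M" and "sets M = sets lborel"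
    and "absolutely_continuous lborel M"
  shows "tau M B = CARD('p) \<and>
    (\<forall>n < CARD('p). AE X in sample_measure n M. max_loglik B (sample_cov n X) = \<infinity>)"
proof -
  have fin: "AE X in sample_measure n M. max_loglik B (sample_cov n X) < \<infinity>" if "CARD('p) \<le> n" for n
    using AE_finite_case[OF assms(3,4,5) that] .
  have inf: "AE X in sample_measure n M. max_loglik B (sample_cov n X) = \<infinity>" if "n < CARD('p)" for n
    using AE_infinite_case[OF assms(3,4,5,2) that] .
  have nt: "\<not> (AE X in sample_measure n M. False)" for n
  proof -
    interpret PS: prob_space "sample_measure n M" unfolding sample_measure_def
      by (intro prob_space_PiM) (simp add: assms(3))
    show ?thesis by (simp add: PS.AE_False)
  qed
  have "tau M B = CARD('p)"
    unfolding tau_def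
  proof (rule Least_equality)
    show "\<forall>n\<ge>CARD('p). AE X in sample_measure n M. max_loglik B (sample_cov n X) < \<infinity>"
      using fin by blast
  next
    fix y assume h: "\<forall>n\<ge>y. AE X in sample_measure n M. max_loglik B (sample_cov n X) < \<infinity>"
    show "CARD('p) \<le> y"
    proof (rule ccontr)
      assume "\<not> CARD('p) \<le> y"
      then have "y < CARD('p)" by simp
      have "AE X in sample_measure y M. max_loglik B (sample_cov y X) < \<infinity>" using h by blast
      moreover have "AE X in sample_measure y M. max_loglik B (sample_cov y X) = \<infinity>"
        using inf[OF \<open>y < CARD('p)\<close>] .
      ultimately have "AE X in sample_measure y M. False" by eventually_elim simp
      then show False using nt by blast
    qed
  qed
  then show ?thesis using inf by blast
qed


end
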